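(* Let $m\geq 2$ be an integer and $n'=2^{m-1}$. Then the number of subgroups of the direct product $\mathbb{Z}_2\times Q_{4n'}$ is $$|L(\mathbb{Z}_2\times Q_{4n'})|=5\sigma(n')+3\tau(n')-2n'+2.$$
   Context: $L(G)$ denotes the set of all subgroups of a group $G$. $Q_{4n'}=\langle x,y\mid x^{2n'}=e,\ y^2=x^{n'},\ y^{-1}xy=x^{-1}\rangle$ is the generalized quaternion group of order $4n'$. For a positive integer $k$, $\tau(k)$ is the number of positive divisors of $k$ and $\sigma(k)$ is their sum. *)

theory Defs
  imports "HOL-Algebra.Algebra"
begin

text \<open>Concrete model of the generalized quaternion group
  Q_{4n} = < x, y | x^(2n) = e, y^2 = x^n, y^-1 x y = x^-1 >.
  The pair (i, j) with 0 <= i < 2n and j in {0,1} represents x^i y^j.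
  Multiplication: x^a y^b * x^c y^d = x^(a + (-1)^b c + b d n) y^((b+d) mod 2).\<close>

definition quaternion_group :: "nat \<Rightarrow> (nat \<times> nat) monoid" where
  "quaternion_group n =
     \<lparr>carrier = {0..<2*n} \<times> {0, 1},
      monoid.mult = (\<lambda>(a, b) (c, d).
         if b = 0 then ((a + c) mod (2*n), d)
         else if d = 0 then ((a + (2*n - c)) mod (2*n), 1)
         else ((a + (2*n - c) + n) mod (2*n), 0)),
      one = (0, 0)\<rparr>"

definition num_divisors :: "nat \<Rightarrow> nat" where
  "num_divisors k = card {d. d dvd k}"

definition sum_divisors :: "nat \<Rightarrow> nat" where
  "sum_divisors k = (\<Sum>d\<in>{d. d dvd k}. d)"

end

theory Submission
  imports Defs "HOL-Computational_Algebra.Primes"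
begin

definition Gq :: "nat \<Rightarrow> (int \<times> (nat \<times> nat)) monoid" where
  "Gq n = integer_mod_group 2 \<times>\<times> quaternion_group n"

definition qa :: "nat \<Rightarrow> nat \<Rightarrow> nat \<Rightarrow> nat \<Rightarrow> nat \<Rightarrow> int" where
  "qa n a b c d = int a + (if b = 0 then int c else - int c) + (if b = 1 \<and> d = 1 then int n else 0)"

lemma carrier_Gq: "carrier (Gq n) = {0,1} \<times> ({0..<2*n} \<times> {0,1})"
  by (auto simp: Gq_def DirProd_def quaternion_group_def carrier_integer_mod_group)

lemma one_Gq: "\<one>\<^bsub>Gq n\<^esub> = (0,(0,0))"
  by (simp add: Gq_def DirProd_def quaternion_group_def)

lemma int_mod_small:
  fixes x M :: int
  assumes "- M \<le> x" "x < 2*M" "M > 0"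
  shows "x mod M = (if x < 0 then x + M else if x < M then x else x - M)"
proof -
  consider "x < 0" | "0 \<le> x" "x < M" | "M \<le> x" by linarith
  then show ?thesis
  proof cases
    case 1
    have "x mod M = (x + M) mod M" by simp
    also have "\<dots> = x + M" using 1 assms by (intro mod_pos_pos_trivial) auto
    finally show ?thesis using 1 by simp
  next
    case 2 thus ?thesis by (simp add: mod_pos_pos_trivial)
  next
    case 3
    have "x mod M = (x - M) mod M" by (simp add: mod_diff_right_eq[symmetric])
    also have "\<dots> = x - M" using 3 assms by (intro mod_pos_pos_trivial) auto
    finally show ?thesis using 3 assms by simp
  qed
qed

lemma mult_Gq:
  assumes "n > 0" "a < 2*n" "c < 2*n" "b \<in> {0,1}" "d \<in> {0,1}"
  shows "(e,(a,b)) \<otimes>\<^bsub>Gq n\<^esub> (e',(c,d)) = ((e+e') mod 2, (nat (qa n a b c d mod int (2*n)), (b+d) mod 2))"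
proof -
  have m: "(e,(a,b)) \<otimes>\<^bsub>Gq n\<^esub> (e',(c,d)) = ((e+e') mod 2,
     (if b = 0 then ((a + c) mod (2*n), d)
         else if d = 0 then ((a + (2*n - c)) mod (2*n), 1)
         else ((a + (2*n - c) + n) mod (2*n), 0)))"
    by (simp add: Gq_def DirProd_def quaternion_group_def)
  have 1: "int ((a + c) mod (2*n)) = qa n a 0 c d mod int (2*n)"
    by (simp add: qa_def zmod_int)
  have 2: "int ((a + (2*n - c)) mod (2*n)) = qa n a 1 c 0 mod int (2*n)"
  proof -
    have e: "int (a + (2*n - c)) = (int a - int c) + int (2*n)"
      using assms by (simp add: of_nat_diff)
    have "int ((a + (2*n - c)) mod (2*n)) = (int a - int c + int (2*n)) mod int (2*n)"
      by (simp only: zmod_int e)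
    also have "\<dots> = (int a - int c) mod int (2*n)" by (rule mod_add_self2)
    also have "\<dots> = qa n a 1 c 0 mod int (2*n)" by (simp add: qa_def)
    finally show ?thesis .
  qed
  have 3: "int ((a + (2*n - c) + n) mod (2*n)) = qa n a 1 c 1 mod int (2*n)"
  proof -
    have e: "int (a + (2*n - c) + n) = (int a - int c + int n) + int (2*n)"
      using assms by (simp add: of_nat_diff)
    have "int ((a + (2*n - c) + n) mod (2*n)) = (int a - int c + int n + int (2*n)) mod int (2*n)"
      by (simp only: zmod_int e)
    also have "\<dots> = (int a - int c + int n) mod int (2*n)" by (rule mod_add_self2)
    also have "\<dots> = qa n a 1 c 1 mod int (2*n)" by (simp add: qa_def)
    finally show ?thesis .
  qed
  show ?thesis using assms
    apply (simp only: m)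
    apply (cases "b = 0"; cases "d = 0")
    using 1 2 3 by (auto simp: qa_def zmod_int[symmetric] nat_int)
qed

lemma qa_mod:
  assumes "n > 0" "a < 2*n" "c < 2*n" "b \<in> {0,1}"
  shows "qa n a b c d mod int (2*n) = (if qa n a b c d < 0 then qa n a b c d + 2 * int n
     else if qa n a b c d < 2 * int n then qa n a b c d else qa n a b c d - 2 * int n)"
proof -
  have "- int (2*n) \<le> qa n a b c d" "qa n a b c d < 2 * int (2*n)"
    using assms by (auto simp: qa_def)
  from int_mod_small[OF this] assms show ?thesis by simp
qed

definition qinv :: "nat \<Rightarrow> nat \<times> nat \<Rightarrow> nat" where
  "qinv n x = (if snd x = 0 then (if fst x = 0 then 0 else 2*n - fst x)
               else (if fst x < n then fst x + n else fst x - n))"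

lemma qinv_lt: "n > 0 \<Longrightarrow> a < 2*n \<Longrightarrow> qinv n (a,b) < 2*n"
  by (auto simp: qinv_def)

lemma qa_inv_r: assumes "n > 0" "a < 2*n" "b \<in> {0,1}"
  shows "qa n a b (qinv n (a,b)) b mod int (2*n) = 0"
proof -
  have "qinv n (a,b) < 2*n" using assms by (simp add: qinv_lt)
  then show ?thesis using assms
    apply (simp only: qa_mod)
    apply (cases "b = 0")
    by (auto simp: qa_def qinv_def)
qed

lemma qa_inv_l: assumes "n > 0" "a < 2*n" "b \<in> {0,1}"
  shows "qa n (qinv n (a,b)) b a b mod int (2*n) = 0"
proof -
  have "qinv n (a,b) < 2*n" using assms by (simp add: qinv_lt)
  then show ?thesis using assms
    apply (simp only: qa_mod)
    apply (cases "b = 0")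
    by (auto simp: qa_def qinv_def)
qed

lemma mod2_01: "e \<in> {0::int,1} \<Longrightarrow> e' \<in> {0,1} \<Longrightarrow> (e + e') mod 2 = 0 \<Longrightarrow> e' = e"
  by auto


lemma mod0_cases:
  fixes x M :: int
  assumes "- M \<le> x" "x < 2*M" "M > 0" "x mod M = 0"
  shows "x = - M \<or> x = 0 \<or> x = M"
  using int_mod_small[OF assms(1-3)] assms(4) by (auto split: if_splits)

lemma inv_Gq:
  assumes "n > 0" "(e,(a,b)) \<in> carrier (Gq n)"
  shows "inv\<^bsub>Gq n\<^esub> (e,(a,b)) = (e, (qinv n (a,b), b))"
proof -
  have ab: "e \<in> {0,1}" "a < 2*n" "b \<in> {0,1}" using assms(2) by (auto simp: carrier_Gq)
  have qi: "qinv n (a,b) < 2*n" using ab assms(1) by (simp add: qinv_lt)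
  have cand: "(e, (qinv n (a,b), b)) \<in> carrier (Gq n)"
    using ab qi by (auto simp: carrier_Gq)
  have ee: "(e + e) mod 2 = 0" using ab by auto
  have bb: "(b + b) mod 2 = 0" using ab by auto
  have p1: "(e,(a,b)) \<otimes>\<^bsub>Gq n\<^esub> (e, (qinv n (a,b), b)) = \<one>\<^bsub>Gq n\<^esub>"
    using ab assms(1) qi qa_inv_r[OF assms(1) ab(2) ab(3)] by (simp add: mult_Gq one_Gq ee bb)
  have p2: "(e, (qinv n (a,b), b)) \<otimes>\<^bsub>Gq n\<^esub> (e,(a,b)) = \<one>\<^bsub>Gq n\<^esub>"
    using ab assms(1) qi qa_inv_l[OF assms(1) ab(2) ab(3)] by (simp add: mult_Gq one_Gq ee bb)
  have uq: "y = (e, (qinv n (a,b), b))" if "y \<in> carrier (Gq n)" "(e,(a,b)) \<otimes>\<^bsub>Gq n\<^esub> y = \<one>\<^bsub>Gq n\<^esub>" for y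
  proof -
    obtain e' c d where y: "y = (e',(c,d))" by (cases y) auto
    have cd: "e' \<in> {0,1}" "c < 2*n" "d \<in> {0,1}" using that(1) y by (auto simp: carrier_Gq)
    have eq: "((e+e') mod 2, (nat (qa n a b c d mod int (2*n)), (b+d) mod 2)) = (0,(0,0))"
      using that(2) y ab cd assms(1) by (simp add: mult_Gq one_Gq)
    have e0: "(e+e') mod 2 = 0" using eq by (metis prod.inject)
    have d0: "(b+d) mod 2 = 0" using eq by (metis prod.inject)
    have e': "e' = e" using e0 ab cd by auto
    have d: "d = b" using d0 ab cd by auto
    have q0: "nat (qa n a b c d mod int (2*n)) = 0" using eq by (metis prod.inject)
    have "qa n a b c d mod int (2*n) \<ge> 0" using assms(1) by simp
    then have q: "qa n a b c b mod int (2*n) = 0" using q0 d by (simp only: d)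
    have "c = qinv n (a,b)"
    proof (cases "b = 0")
      case True
      have qq: "qa n a b c b = int a + int c" using True by (simp add: qa_def)
      have "int a + int c = - int (2*n) \<or> int a + int c = 0 \<or> int a + int c = int (2*n)"
        by (rule mod0_cases) (use ab cd assms(1) q qq in auto)
      then have "a + c = 0 \<or> a + c = 2*n" by linarith
      then show ?thesis using True ab cd by (auto simp: qinv_def)
    next
      case False
      then have b1: "b = 1" using ab by auto
      have qq: "qa n a b c b = int a - int c + int n" using b1 by (simp add: qa_def)
      have "int a - int c + int n = - int (2*n) \<or> int a - int c + int n = 0 \<or> int a - int c + int n = int (2*n)"
        by (rule mod0_cases) (use ab cd assms(1) q qq in auto)
      then have "a + n = c \<or> a = c + n" using cd by linarith
      then show ?thesis using b1 ab cd by (auto simp: qinv_def)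
    qed
    then show ?thesis using y e' d by simp
  qed
  show ?thesis unfolding m_inv_def
    apply (rule the_equality)
    using cand p1 p2 apply blast
    using uq by blast
qed

definition HS :: "nat \<Rightarrow> nat \<Rightarrow> (int \<times> nat) set \<Rightarrow> nat \<Rightarrow> nat \<Rightarrow> (int \<times> (nat \<times> nat)) set" where
  "HS n d L r s = {(e,(a,b)). (e,b) \<in> L \<and> a < 2*n \<and> int d dvd (int a - (e * int r + int b * int s))}"

lemma qa_mod_dvd: "int (2*n) dvd (qa n a b c b' mod int (2*n) - qa n a b c b')"
  by (simp add: mod_eq_dvd_iff[symmetric])

lemma qinv_dvd:
  assumes "n > 0" "a < 2*n" "b \<in> {0,1}"
  shows "int (2*n) dvd (int (qinv n (a,b)) - (if b = 0 then - int a else int a + int n))"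
proof (cases "b = 0")
  case True
  show ?thesis
  proof (cases "a = 0")
    case True
    then show ?thesis using \<open>b = 0\<close> by (simp add: qinv_def)
  next
    case False
    then have "int (qinv n (a,b)) - (if b = 0 then - int a else int a + int n) = int (2*n)"
      using \<open>b = 0\<close> assms by (simp add: qinv_def of_nat_diff)
    then show ?thesis by simp
  qed
next
  case False
  then have b1: "b = 1" using assms by auto
  show ?thesis
  proof (cases "a < n")
    case True
    then show ?thesis using b1 by (simp add: qinv_def)
  next
    case False
    then have "int (qinv n (a,b)) - (if b = 0 then - int a else int a + int n) = - int (2*n)"
      using b1 assms by (simp add: qinv_def of_nat_diff)
    then show ?thesis by simp
  qed
qed

lemma HS_subgroup:
  assumes n: "n > 0" and dN: "d dvd 2*n"
    and Lsub: "L \<subseteq> {0,1} \<times> {0,1}" and L0: "(0,0) \<in> L"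
    and Lcl: "\<And>e b e' b'. (e,b) \<in> L \<Longrightarrow> (e',b') \<in> L \<Longrightarrow> ((e+e') mod 2, (b+b') mod 2) \<in> L"
    and r2: "int d dvd 2 * int r"
    and dn: "\<And>e. (e,1) \<in> L \<Longrightarrow> d dvd n"
  shows "subgroup (HS n d L r s) (Gq n)"
proof -
  have dN': "int d dvd int (2*n)" by (subst int_dvd_int_iff) (rule dN)
  have sub: "HS n d L r s \<subseteq> carrier (Gq n)"
    using Lsub by (auto simp: HS_def carrier_Gq)
  have one: "\<one>\<^bsub>Gq n\<^esub> \<in> HS n d L r s"
    using L0 n by (simp add: HS_def one_Gq)
  have mul: "x \<otimes>\<^bsub>Gq n\<^esub> y \<in> HS n d L r s" if x: "x \<in> HS n d L r s" and y: "y \<in> HS n d L r s" for x y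
  proof -
    obtain e a b where xe: "x = (e,(a,b))" by (cases x) auto
    obtain e' c b' where ye: "y = (e',(c,b'))" by (cases y) auto
    have xL: "(e,b) \<in> L" "a < 2*n" and dx: "int d dvd (int a - (e * int r + int b * int s))"
      using x xe by (auto simp: HS_def)
    have yL: "(e',b') \<in> L" "c < 2*n" and dy: "int d dvd (int c - (e' * int r + int b' * int s))"
      using y ye by (auto simp: HS_def)
    have e01: "e \<in> {0,1}" "b \<in> {0,1}" using xL Lsub by auto
    have e01': "e' \<in> {0,1}" "b' \<in> {0,1}" using yL Lsub by auto
    have prod: "x \<otimes>\<^bsub>Gq n\<^esub> y = ((e+e') mod 2, (nat (qa n a b c b' mod int (2*n)), (b+b') mod 2))"
      unfolding xe ye using n xL yL e01 e01' by (simp add: mult_Gq)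
    define q where "q = qa n a b c b'"
    have qpos: "q mod int (2*n) \<ge> 0" using n by simp
    have qlt: "nat (q mod int (2*n)) < 2*n" using n by (simp add: nat_less_iff)
    have ee: "(e+e') mod 2 = e + e' - 2*e*e'" using e01 e01' by auto
    have bb: "int ((b+b') mod 2) = int b + int b' - 2 * int b * int b'" using e01 e01' by auto
    have qdef: "q = int a + (1 - 2 * int b) * int c + int b * int b' * int n"
      using e01 e01' by (auto simp: q_def qa_def)
    have bbn: "int d dvd int b * int b' * int n"
    proof (cases "b = 1 \<and> b' = 1")
      case True
      then have "d dvd n" using dn xL by auto
      then show ?thesis using True by (simp add: int_dvd_int_iff)
    next
      case False
      then have "int b * int b' = 0" using e01 e01' by auto
      then show ?thesis by (metis dvd_0_right mult_zero_left)
    qed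
    have key: "q - ((e + e' - 2*e*e') * int r + (int b + int b' - 2 * int b * int b') * int s)
      = (int a - (e * int r + int b * int s)) + (1 - 2 * int b) * (int c - (e' * int r + int b' * int s))
        + (e*e' - int b * e') * (2 * int r) + int b * int b' * int n"
      unfolding qdef by (simp add: algebra_simps)
    have "int d dvd q - ((e + e' - 2*e*e') * int r + (int b + int b' - 2 * int b * int b') * int s)"
      unfolding key by (rule dvd_add[OF dvd_add[OF dvd_add[OF dx dvd_mult[OF dy]] dvd_mult[OF r2]] bbn])
    moreover have "int d dvd (q mod int (2*n) - q)"
      using dvd_trans[OF dN' qa_mod_dvd] unfolding q_def .
    ultimately have D: "int d dvd ((q mod int (2*n) - q) + (q - ((e + e' - 2*e*e') * int r + (int b + int b' - 2 * int b * int b') * int s)))"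
      by (intro dvd_add)
    have I: "int (nat (q mod int (2*n))) = q mod int (2*n)" using qpos by (rule nat_0_le)
    have E: "(q mod int (2*n) - q) + (q - ((e + e' - 2*e*e') * int r + (int b + int b' - 2 * int b * int b') * int s))
       = int (nat (q mod int (2*n))) - ((e+e') mod 2 * int r + int ((b+b') mod 2) * int s)"
      unfolding I ee bb by simp
    have "int d dvd (int (nat (q mod int (2*n))) - ((e+e') mod 2 * int r + int ((b+b') mod 2) * int s))"
      using D unfolding E .
    moreover have "((e+e') mod 2, (b+b') mod 2) \<in> L" using Lcl xL yL by blast
    ultimately show ?thesis unfolding prod using qlt by (simp add: HS_def q_def)
  qed
  have inv: "inv\<^bsub>Gq n\<^esub> x \<in> HS n d L r s" if x: "x \<in> HS n d L r s" for x
  proof -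
    obtain e a b where xe: "x = (e,(a,b))" by (cases x) auto
    have xL: "(e,b) \<in> L" "a < 2*n" and dx: "int d dvd (int a - (e * int r + int b * int s))"
      using x xe by (auto simp: HS_def)
    have e01: "e \<in> {0,1}" "b \<in> {0,1}" using xL Lsub by auto
    have xc: "x \<in> carrier (Gq n)" using sub x by auto
    have iv: "inv\<^bsub>Gq n\<^esub> x = (e, (qinv n (a,b), b))"
      using inv_Gq[OF n] xc xe by simp
    have d1: "int d dvd (int (qinv n (a,b)) - (if b = 0 then - int a else int a + int n))"
      using dvd_trans[OF dN' qinv_dvd[OF n xL(2) e01(2)]] .
    have d2: "int d dvd ((if b = 0 then - int a else int a + int n) - (e * int r + int b * int s))"
    proof (cases "b = 0")
      case True
      have E: "(if b = 0 then - int a else int a + int n) - (e * int r + int b * int s)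
          = - (int a - (e * int r + int b * int s)) - e * (2 * int r)" using True by (simp add: algebra_simps)
      moreover have "int d dvd - (int a - (e * int r + int b * int s)) - e * (2 * int r)"
        by (rule dvd_diff[OF _ dvd_mult[OF r2]]) (simp only: dvd_minus_iff dx)
      ultimately show ?thesis by (simp only: E)
    next
      case False
      then have b1: "b = 1" using e01 by auto
      have "d dvd n" using dn xL b1 by auto
      then have dn': "int d dvd int n" by (simp add: int_dvd_int_iff)
      have E: "(if b = 0 then - int a else int a + int n) - (e * int r + int b * int s)
          = (int a - (e * int r + int b * int s)) + int n" using b1 by (simp add: algebra_simps)
      then show ?thesis using dvd_add[OF dx dn'] by (simp only: E)
    qed
    have E: "(int (qinv n (a,b)) - (if b = 0 then - int a else int a + int n)) +
       ((if b = 0 then - int a else int a + int n) - (e * int r + int b * int s))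
       = int (qinv n (a,b)) - (e * int r + int b * int s)" by simp
    have "int d dvd (int (qinv n (a,b)) - (e * int r + int b * int s))"
      using dvd_add[OF d1 d2] unfolding E .
    then show ?thesis unfolding iv using xL qinv_lt[OF n xL(2)] by (simp add: HS_def)
  qed
  show ?thesis
    by (rule subgroup.intro) (use sub one mul inv in auto)
qed

lemma cyclic_sub:
  fixes S :: "nat set" and N :: nat
  assumes N: "N > 0" and Ssub: "S \<subseteq> {..<N}" and S0: "0 \<in> S"
    and Sadd: "\<And>a c. a \<in> S \<Longrightarrow> c \<in> S \<Longrightarrow> (a + c) mod N \<in> S"
    and Sneg: "\<And>a. a \<in> S \<Longrightarrow> (N - a) mod N \<in> S"
  shows "\<exists>d. d dvd N \<and> S = {a. a < N \<and> d dvd a}"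
proof (cases "\<exists>a\<in>S. a > 0")
  case False
  then have "S = {0}" using S0 by auto
  moreover have "{a. a < N \<and> N dvd a} = {0}"
  proof
    show "{a. a < N \<and> N dvd a} \<subseteq> {0}"
    proof
      fix a assume "a \<in> {a. a < N \<and> N dvd a}"
      then have "a < N" "N dvd a" by auto
      then show "a \<in> {0}" using dvd_imp_le[of N a] by (cases "a = 0") auto
    qed
  qed (use N in simp)
  ultimately have "S = {a. a < N \<and> N dvd a}" by simp
  then show ?thesis by (intro exI[of _ N]) simp
next
  case True
  define P where "P = {a\<in>S. 0 < a}"
  have finP: "finite P" by (rule finite_subset[of _ "{..<N}"]) (use Ssub in \<open>auto simp: P_def\<close>)
  have neP: "P \<noteq> {}" using True unfolding P_def by auto
  define d where "d = Min P"
  have dP: "d \<in> P" using finP neP unfolding d_def by simp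
  have dS: "d \<in> S" and d0: "d > 0" using dP unfolding P_def by auto
  have dmin: "d \<le> x" if "x \<in> S" "0 < x" for x
  proof -
    have "x \<in> P" using that unfolding P_def by simp
    then show ?thesis unfolding d_def using finP by simp
  qed
  have dN: "d < N" using dS Ssub by auto
  have lt: "\<And>x. x \<in> S \<Longrightarrow> x < N" using Ssub by auto
  have mult: "(j*d) mod N \<in> S" for j
  proof (induction j)
    case 0 then show ?case using S0 by simp
  next
    case (Suc j)
    have "((j*d) mod N + d) mod N \<in> S" using Sadd[OF Suc dS] .
    moreover have "((j*d) mod N + d) mod N = (Suc j * d) mod N"
    proof -
      have "((j*d) mod N + d) mod N = (j*d + d) mod N" by (rule mod_add_left_eq)
      also have "j*d + d = Suc j * d" by simp
      finally show ?thesis .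
    qed
    ultimately show ?case by simp
  qed
  have sub: "a - c \<in> S" if "a \<in> S" "c \<in> S" "c \<le> a" for a c
  proof (cases "c = 0")
    case True then show ?thesis using that by simp
  next
    case False
    have "(N - c) mod N = N - c" using False N by simp
    then have "N - c \<in> S" using Sneg[OF that(2)] by simp
    then have "(a + (N - c)) mod N \<in> S" using Sadd that(1) by blast
    moreover have "(a + (N - c)) mod N = a - c"
    proof -
      have e: "a + (N - c) = (a - c) + N" using that lt[OF that(2)] by simp
      show ?thesis unfolding e mod_add_self2 using lt[OF that(1)] by simp
    qed
    ultimately show ?thesis by simp
  qed
  have memS: "d dvd a" if "a \<in> S" for a
  proof -
    have m1: "(a div d * d) mod N \<in> S" by (rule mult)
    have le: "a div d * d \<le> a" by simp
    have "(a div d * d) mod N = a div d * d" by (rule mod_less) (use le lt[OF that] in linarith)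
    then have m2: "a div d * d \<in> S" using m1 by simp
    have "a - a div d * d \<in> S" by (rule sub[OF that m2 le])
    moreover have "a - a div d * d = a mod d" by (simp add: minus_div_mult_eq_mod)
    ultimately have "a mod d \<in> S" by simp
    moreover have "a mod d < d" using d0 by simp
    ultimately have "a mod d = 0" using dmin by (meson leD neq0_conv)
    then show ?thesis by (simp add: mod_eq_0_iff_dvd)
  qed
  have dvdN: "d dvd N"
  proof (rule ccontr)
    assume nd: "\<not> d dvd N"
    define x where "x = N div d * d"
    have xle: "x \<le> N" unfolding x_def by simp
    have xne: "x \<noteq> N" using nd unfolding x_def by (metis dvd_triv_right)
    have x0: "x > 0" unfolding x_def using dN d0 by (simp add: div_greater_zero_iff)
    have xS: "x \<in> S" using mult[of "N div d"] xle xne unfolding x_def by simp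
    have "(N - x) mod N = N - x" using x0 N by simp
    then have "N - x \<in> S" using Sneg[OF xS] by simp
    moreover have "N - x = N mod d" unfolding x_def by (simp add: minus_div_mult_eq_mod)
    ultimately have "N mod d \<in> S" by simp
    moreover have "N mod d > 0" using nd mod_eq_0_iff_dvd[of N d] by linarith
    moreover have "N mod d < d" using d0 by simp
    ultimately show False using dmin by (meson leD)
  qed
  have "S = {a. a < N \<and> d dvd a}"
  proof
    show "S \<subseteq> {a. a < N \<and> d dvd a}" using memS lt by auto
    show "{a. a < N \<and> d dvd a} \<subseteq> S"
    proof
      fix a assume "a \<in> {a. a < N \<and> d dvd a}"
      then have aN: "a < N" and "d dvd a" by auto
      then obtain j where "a = d * j" by (elim dvdE)
      then have "a = j * d" "a < N" using aN by simp_all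
      then show "a \<in> S" using mult[of j] by simp
    qed
  qed
  then show ?thesis using dvdN by blast
qed

lemma memH:
  assumes "subgroup H (Gq n)" "(e,(a,b)) \<in> H"
  shows "e \<in> {0,1}" "a < 2*n" "b \<in> {0,1}"
  using subgroup.subset[OF assms(1)] assms(2) by (auto simp: carrier_Gq)

lemma nat_qa_mod: "nat (int x mod int (2*n)) = x mod (2*n)"
  by (simp add: zmod_int[symmetric] del: of_nat_mult)

lemma P00:
  assumes "n > 0" "a < 2*n" "c < 2*n" "e \<in> {0,1}" "b \<in> {0,1}"
  shows "(0,(a,0)) \<otimes>\<^bsub>Gq n\<^esub> (e,(c,b)) = (e, ((a + c) mod (2*n), b))"
proof -
  have "(0,(a,0)) \<otimes>\<^bsub>Gq n\<^esub> (e,(c,b)) = ((0+e) mod 2, (nat (qa n a 0 c b mod int (2*n)), (0+b) mod 2))"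
    using assms by (intro mult_Gq) auto
  moreover have "qa n a 0 c b = int (a + c)" by (simp add: qa_def)
  moreover have "(0+e) mod 2 = e" "(0+b) mod 2 = b" using assms by auto
  ultimately show ?thesis by (simp only: nat_qa_mod)
qed

lemma Psq:
  assumes "n > 0" "f < 2*n" "e \<in> {0,1}" "b \<in> {0,1}"
  shows "(e,(f,b)) \<otimes>\<^bsub>Gq n\<^esub> (e,(f,b)) = (0, (if b = 0 then (2*f) mod (2*n) else n, 0))"
proof -
  have "(e,(f,b)) \<otimes>\<^bsub>Gq n\<^esub> (e,(f,b)) = ((e+e) mod 2, (nat (qa n f b f b mod int (2*n)), (b+b) mod 2))"
    using assms by (intro mult_Gq) auto
  moreover have "qa n f b f b = int (if b = 0 then 2*f else n)" using assms by (auto simp: qa_def)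
  moreover have "(e+e) mod 2 = 0" "(b+b) mod 2 = 0" using assms by auto
  moreover have "(if b = 0 then 2*f else n) mod (2*n) = (if b = 0 then (2*f) mod (2*n) else n)"
    using assms by auto
  ultimately show ?thesis by (simp only: nat_qa_mod)
qed

lemma P1:
  assumes "n > 0" "f < 2*n" "g < 2*n"
  shows "(1,(f,0)) \<otimes>\<^bsub>Gq n\<^esub> (0,(g,1)) = (1, ((f+g) mod (2*n), 1))"
proof -
  have "(1,(f,0)) \<otimes>\<^bsub>Gq n\<^esub> (0,(g,1)) = ((1+0) mod 2, (nat (qa n f 0 g 1 mod int (2*n)), (0+1) mod 2))"
    using assms by (intro mult_Gq) auto
  moreover have "qa n f 0 g 1 = int (f + g)" by (simp add: qa_def)
  ultimately show ?thesis by (simp only: nat_qa_mod) simp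
qed

lemma Pgen:
  assumes "n > 0" "a < 2*n" "c < 2*n" "e \<in> {0,1}" "b \<in> {0,1}" "e' \<in> {0,1}" "b' \<in> {0,1}"
  shows "(e,(a,b)) \<otimes>\<^bsub>Gq n\<^esub> (e',(c,b')) = ((e+e') mod 2, ((nat (qa n a b c b' mod int (2*n))), (b+b') mod 2))"
  using assms by (intro mult_Gq) auto


lemma qa_nat_dvd:
  assumes "n > 0" "d dvd 2*n"
  shows "int d dvd (int (nat (qa n a b c b' mod int (2*n))) - qa n a b c b')"
proof -
  have "int (nat (qa n a b c b' mod int (2*n))) = qa n a b c b' mod int (2*n)"
    using assms(1) by simp
  moreover have "int d dvd int (2*n)" by (subst int_dvd_int_iff) (rule assms(2))
  ultimately show ?thesis using dvd_trans qa_mod_dvd by metis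
qed

lemma qinv0: "a < 2*n \<Longrightarrow> qinv n (a,0) = (2*n - a) mod (2*n)"
  by (auto simp: qinv_def)

definition Lc :: "nat \<Rightarrow> (int \<times> nat) set" where
  "Lc c = {(e,b). e \<in> {0,1} \<and> b \<in> {0,1} \<and> (c = 0 \<longrightarrow> e = 0 \<and> b = 0) \<and> (c = 1 \<longrightarrow> b = 0)
      \<and> (c = 2 \<longrightarrow> e = 0) \<and> (c = 3 \<longrightarrow> e = int b)}"

lemma dmod: "int d dvd (int x - int (x mod d))"
proof -
  have "int x - int (x mod d) = int (x - x mod d)" by (simp add: of_nat_diff)
  also have "x - x mod d = d * (x div d)" by (simp add: minus_mod_eq_mult_div)
  finally show ?thesis by simp
qed

context
  fixes n :: nat and H
  assumes n: "n > 0" and sg: "subgroup H (Gq n)"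
begin

lemma Hmul: "x \<in> H \<Longrightarrow> y \<in> H \<Longrightarrow> x \<otimes>\<^bsub>Gq n\<^esub> y \<in> H"
  using sg by (rule subgroup.m_closed)

lemma Hinv: "x \<in> H \<Longrightarrow> inv\<^bsub>Gq n\<^esub> x \<in> H"
  using sg by (rule subgroup.m_inv_closed)

lemma Hone: "(0,(0,0)) \<in> H"
  using subgroup.one_closed[OF sg] by (simp add: one_Gq)

lemma Hcar: "x \<in> H \<Longrightarrow> x \<in> carrier (Gq n)"
  using subgroup.subset[OF sg] by auto

lemma Sdesc: "\<exists>d. d dvd 2*n \<and> (\<forall>a. (0,(a,0)) \<in> H \<longleftrightarrow> a < 2*n \<and> d dvd a)"
proof -
  define S where "S = {a. (0,(a,0)) \<in> H}"
  have N: "2*n > 0" using n by simp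
  have Ssub: "S \<subseteq> {..<2*n}" using memH[OF sg] unfolding S_def by auto
  have S0: "0 \<in> S" using Hone unfolding S_def by simp
  have Sadd: "(a + c) mod (2*n) \<in> S" if "a \<in> S" "c \<in> S" for a c
  proof -
    have "a < 2*n" "c < 2*n" using that Ssub by auto
    then have "(0,(a,0)) \<otimes>\<^bsub>Gq n\<^esub> (0,(c,0)) = (0, ((a + c) mod (2*n), 0))"
      using n by (intro P00) auto
    moreover have "(0,(a,0)) \<otimes>\<^bsub>Gq n\<^esub> (0,(c,0)) \<in> H" using that Hmul unfolding S_def by simp
    ultimately show ?thesis unfolding S_def by simp
  qed
  have Sneg: "(2*n - a) mod (2*n) \<in> S" if "a \<in> S" for a
  proof -
    have a: "(0,(a,0)) \<in> H" using that unfolding S_def by simp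
    have "inv\<^bsub>Gq n\<^esub> (0,(a,0)) = (0,(qinv n (a,0),0))" using inv_Gq[OF n] Hcar[OF a] by simp
    moreover have "qinv n (a,0) = (2*n - a) mod (2*n)" using memH(2)[OF sg a] by (rule qinv0)
    ultimately show ?thesis using Hinv[OF a] unfolding S_def by simp
  qed
  obtain d where "d dvd 2*n" "S = {a. a < 2*n \<and> d dvd a}"
    using cyclic_sub[OF N Ssub S0 Sadd Sneg] by blast
  then show ?thesis unfolding S_def by (intro exI[of _ d]) (auto simp: set_eq_iff)
qed



context
  fixes d :: nat
  assumes dN: "d dvd 2*n" and dS: "\<And>a. (0,(a,0)) \<in> H \<longleftrightarrow> a < 2*n \<and> d dvd a"
begin

lemma dN': "int d dvd int (2*n)" by (subst int_dvd_int_iff) (rule dN)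

lemma fiber:
  assumes f: "(e,(f,b)) \<in> H" and a: "a < 2*n"
  shows "(e,(a,b)) \<in> H \<longleftrightarrow> int d dvd (int a - int f)"
proof -
  have e01: "e \<in> {0,1}" "f < 2*n" "b \<in> {0,1}" using memH[OF sg f] by auto
  show ?thesis
  proof
    assume x: "(e,(a,b)) \<in> H"
    define q where "q = qinv n (f,b)"
    have q2: "q < 2*n" unfolding q_def using qinv_lt[OF n e01(2)] .
    have iv: "inv\<^bsub>Gq n\<^esub> (e,(f,b)) = (e,(q,b))" unfolding q_def using inv_Gq[OF n] Hcar[OF f] by simp
    have yH: "(e,(q,b)) \<in> H" using Hinv[OF f] unfolding iv .
    define t where "t = nat (qa n a b q b mod int (2*n))"
    have "(e,(a,b)) \<otimes>\<^bsub>Gq n\<^esub> (e,(q,b)) = ((e+e) mod 2, (t, (b+b) mod 2))"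
      unfolding t_def using n a q2 e01 by (intro Pgen) auto
    moreover have "(e+e) mod 2 = 0" "(b+b) mod 2 = 0" using e01 by auto
    ultimately have "(0,(t,0)) \<in> H" using Hmul[OF x yH] by simp
    then have dt: "int d dvd int t" using dS by (simp add: int_dvd_int_iff)
    have d1: "int d dvd (int t - qa n a b q b)" unfolding t_def by (rule qa_nat_dvd[OF n dN])
    have d2: "int d dvd (int q - (if b = 0 then - int f else int f + int n))"
      using dvd_trans[OF dN' qinv_dvd[OF n e01(2) e01(3)]] unfolding q_def .
    have E: "int a - int f = int t - (int t - qa n a b q b) - (1 - 2 * int b) * (int q - (if b = 0 then - int f else int f + int n))"
      using e01(3) by (auto simp: qa_def algebra_simps)
    show "int d dvd (int a - int f)" unfolding E
      by (intro dvd_diff dvd_mult dt d1 d2)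
  next
    assume da: "int d dvd (int a - int f)"
    define t where "t = nat ((int a - int f) mod int (2*n))"
    have tI: "int t = (int a - int f) mod int (2*n)" unfolding t_def using n by simp
    have t2: "t < 2*n" unfolding t_def using n by (simp add: nat_less_iff)
    have "int d dvd int t"
    proof -
      have "int (2*n) dvd (int t - (int a - int f))" unfolding tI by (simp add: mod_eq_dvd_iff[symmetric])
      then have "int d dvd (int t - (int a - int f))" using dvd_trans[OF dN'] by blast
      from dvd_add[OF this da] show ?thesis by simp
    qed
    then have "(0,(t,0)) \<in> H" using dS t2 by (simp add: int_dvd_int_iff)
    from Hmul[OF this f] have "(e, ((t + f) mod (2*n), b)) \<in> H"
      using P00[OF n t2 e01(2) e01(1) e01(3)] by simp
    moreover have "(t + f) mod (2*n) = a"
    proof -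
      have "int ((t + f) mod (2*n)) = (int t + int f) mod int (2*n)" by (simp add: zmod_int)
      also have "\<dots> = ((int a - int f) mod int (2*n) + int f) mod int (2*n)" unfolding tI ..
      also have "\<dots> = (int a - int f + int f) mod int (2*n)" by (rule mod_add_left_eq)
      also have "\<dots> = int a" using a by simp
      finally show ?thesis by simp
    qed
    ultimately show "(e,(a,b)) \<in> H" by simp
  qed
qed

lemma dpos: "d > 0" using dN n by (cases "d = 0") auto

lemma main_rep: "\<exists>c r s. c < 5 \<and> r < d \<and> s < d \<and> (c \<in> {0,2,3} \<longrightarrow> r = 0) \<and> (c \<in> {0,1} \<longrightarrow> s = 0)
   \<and> d dvd 2*r \<and> (c \<in> {2,3,4} \<longrightarrow> d dvd n) \<and> H = HS n d (Lc c) r s"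
proof -
  define L where "L = {(e,b). \<exists>a. (e,(a,b)) \<in> H}"
  define fr where "fr e b = (SOME a. (e,(a,b)) \<in> H)" for e b
  have fr_mem: "(e,(fr e b, b)) \<in> H" if "(e,b) \<in> L" for e b
    using that unfolding L_def fr_def by (auto intro: someI)
  have Lmem: "e \<in> {0,1} \<and> b \<in> {0,1}" if "(e,b) \<in> L" for e b
    using memH[OF sg fr_mem[OF that]] by simp
  have frlt: "fr e b < 2*n" if "(e,b) \<in> L" for e b
    using memH[OF sg fr_mem[OF that]] by simp
  have Hrep: "(e,(a,b)) \<in> H \<longleftrightarrow> (e,b) \<in> L \<and> a < 2*n \<and> int d dvd (int a - int (fr e b))" for e a b
  proof
    assume h: "(e,(a,b)) \<in> H"
    then have eL: "(e,b) \<in> L" unfolding L_def by auto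
    have a2: "a < 2*n" using memH[OF sg h] by simp
    show "(e,b) \<in> L \<and> a < 2*n \<and> int d dvd (int a - int (fr e b))"
      using eL a2 fiber[OF fr_mem[OF eL] a2] h by simp
  next
    assume h: "(e,b) \<in> L \<and> a < 2*n \<and> int d dvd (int a - int (fr e b))"
    then show "(e,(a,b)) \<in> H" using fiber[OF fr_mem, of e b a] by simp
  qed
  have Lcl: "((e+e') mod 2, (b+b') mod 2) \<in> L" if "(e,b) \<in> L" "(e',b') \<in> L" for e b e' b'
  proof -
    have "(e,(fr e b,b)) \<otimes>\<^bsub>Gq n\<^esub> (e',(fr e' b',b')) \<in> H"
      using Hmul fr_mem that by blast
    moreover have "(e,(fr e b,b)) \<otimes>\<^bsub>Gq n\<^esub> (e',(fr e' b',b')) = ((e+e') mod 2, ((nat (qa n (fr e b) b (fr e' b') b' mod int (2*n))), (b+b') mod 2))"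
      using Lmem[OF that(1)] Lmem[OF that(2)] frlt[OF that(1)] frlt[OF that(2)] n by (intro Pgen) auto
    ultimately show ?thesis unfolding L_def by auto
  qed
  have L00: "(0,0) \<in> L" using Hone unfolding L_def by auto
  have c1: "(1,1) \<in> L" if "(1,0) \<in> L" "(0,1) \<in> L" using Lcl[OF that] by simp
  have c2: "(0,1) \<in> L" if "(1,0) \<in> L" "(1,1) \<in> L" using Lcl[OF that] by simp
  have c3: "(1,0) \<in> L" if "(0,1) \<in> L" "(1,1) \<in> L" using Lcl[OF that] by simp
  have d2r: "d dvd 2 * fr 1 0" if "(1,0) \<in> L"
  proof -
    have "(1,(fr 1 0,0)) \<otimes>\<^bsub>Gq n\<^esub> (1,(fr 1 0,0)) = (0,((2 * fr 1 0) mod (2*n), 0))"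
      using Psq[OF n frlt[OF that], of 1 0] by simp
    then have "(0,((2 * fr 1 0) mod (2*n), 0)) \<in> H" using Hmul fr_mem[OF that] by metis
    then have "d dvd (2 * fr 1 0) mod (2*n)" using dS by blast
    then show ?thesis using dvd_mod_iff[OF dN] by blast
  qed
  have dnn: "d dvd n" if "(e,1) \<in> L" for e
  proof -
    have e01: "e \<in> {0,1}" using Lmem[OF that] by simp
    have "(e,(fr e 1,1)) \<otimes>\<^bsub>Gq n\<^esub> (e,(fr e 1,1)) = (0,(n, 0))"
      using Psq[OF n frlt[OF that] e01, of 1] by simp
    then have "(0,(n, 0)) \<in> H" using Hmul fr_mem[OF that] by metis
    then show "d dvd n" using dS by blast
  qed
  have cross: "int d dvd (int (fr 1 0) + int (fr 0 1) - int (fr 1 1))" if "(1,0) \<in> L" "(0,1) \<in> L"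
  proof -
    have "(1,(fr 1 0,0)) \<otimes>\<^bsub>Gq n\<^esub> (0,(fr 0 1,1)) = (1,((fr 1 0 + fr 0 1) mod (2*n), 1))"
      using P1[OF n frlt[OF that(1)] frlt[OF that(2)]] .
    then have "(1,((fr 1 0 + fr 0 1) mod (2*n), 1)) \<in> H" using Hmul fr_mem that by metis
    then have h: "int d dvd (int ((fr 1 0 + fr 0 1) mod (2*n)) - int (fr 1 1))" using Hrep by blast
    have "int (2*n) dvd (int (fr 1 0 + fr 0 1) - int ((fr 1 0 + fr 0 1) mod (2*n)))"
      by (simp only: zmod_int mod_eq_dvd_iff[symmetric] mod_mod_trivial)
    then have "int d dvd (int (fr 1 0 + fr 0 1) - int ((fr 1 0 + fr 0 1) mod (2*n)))"
      using dvd_trans[OF dN'] by blast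
    from dvd_add[OF this h] show ?thesis by (simp add: add_diff_eq)
  qed
  define r where "r = (if (1,0) \<in> L then fr 1 0 mod d else 0)"
  define s where "s = (if (0,1) \<in> L then fr 0 1 mod d else if (1,1) \<in> L then fr 1 1 mod d else 0)"
  define c where "c = (if (1,0) \<in> L \<and> (0,1) \<in> L then 4 else if (1,0) \<in> L then 1 else if (0,1) \<in> L then 2
     else if (1,1) \<in> L then 3 else (0::nat))"
  have cA: "c = 0 \<or> c = 1 \<or> c = 2 \<or> c = 3 \<or> c = 4"
    by (cases "(1::int,0::nat) \<in> L"; cases "(0::int,1::nat) \<in> L"; cases "(1::int,1::nat) \<in> L") (simp_all only: c_def if_True if_False simp_thms)
  have m10: "(1,0) \<in> L \<longleftrightarrow> c = 1 \<or> c = 4"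
    by (cases "(1::int,0::nat) \<in> L"; cases "(0::int,1::nat) \<in> L"; cases "(1::int,1::nat) \<in> L") (simp_all add: c_def)
  have m01: "(0,1) \<in> L \<longleftrightarrow> c = 2 \<or> c = 4"
    by (cases "(1::int,0::nat) \<in> L"; cases "(0::int,1::nat) \<in> L"; cases "(1::int,1::nat) \<in> L") (use c2 in \<open>simp_all add: c_def\<close>)
  have m11: "(1,1) \<in> L \<longleftrightarrow> c = 3 \<or> c = 4"
    by (cases "(1::int,0::nat) \<in> L"; cases "(0::int,1::nat) \<in> L"; cases "(1::int,1::nat) \<in> L") (use c1 c2 c3 in \<open>simp_all add: c_def\<close>)
  have LL: "L = Lc c"
  proof (rule Set.set_eqI)
    fix x :: "int \<times> nat"
    obtain e b where x: "x = (e,b)" by (cases x)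
    show "x \<in> L \<longleftrightarrow> x \<in> Lc c"
    proof (cases "e \<in> {0,1} \<and> b \<in> {0,1}")
      case False
      then show ?thesis using Lmem unfolding x Lc_def by blast
    next
      case True
      then consider "e = 0" "b = 0" | "e = 1" "b = 0" | "e = 0" "b = 1" | "e = 1" "b = 1" by auto
      then show ?thesis
      proof cases
        case 1 then show ?thesis using L00 unfolding x Lc_def by simp
      next
        case 2 then show ?thesis using m10 cA unfolding x Lc_def by auto
      next
        case 3 then show ?thesis using m01 cA unfolding x Lc_def by auto
      next
        case 4 then show ?thesis using m11 cA unfolding x Lc_def by auto
      qed
    qed
  qed
  have key: "int d dvd (int (fr e b) - (e * int r + int b * int s))" if "(e,b) \<in> L" for e b
  proof -
    have eb: "e \<in> {0,1}" "b \<in> {0,1}" using Lmem[OF that] by auto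
    consider "e = 0" "b = 0" | "e = 1" "b = 0" | "e = 0" "b = 1" | "e = 1" "b = 1" using eb by auto
    then show ?thesis
    proof cases
      case 1
      then have "d dvd fr 0 0" using dS fr_mem[OF that] by simp
      then show ?thesis using 1 by (simp add: r_def s_def int_dvd_int_iff)
    next
      case 2
      then show ?thesis using that dmod[of d "fr 1 0"] by (simp add: r_def s_def)
    next
      case 3
      then show ?thesis using that dmod[of d "fr 0 1"] by (simp add: r_def s_def)
    next
      case 4
      show ?thesis
      proof (cases "(0,1) \<in> L")
        case True
        then have t10: "(1,0) \<in> L" using c3 that 4 by simp
        have E: "int (fr 1 1) - (int r + int s) = (int (fr 1 0) - int r) + (int (fr 0 1) - int s) - (int (fr 1 0) + int (fr 0 1) - int (fr 1 1))"
          by simp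
        have A: "int d dvd int (fr 1 0) - int r" using dmod[of d "fr 1 0"] t10 by (simp add: r_def)
        have B: "int d dvd int (fr 0 1) - int s" using dmod[of d "fr 0 1"] True by (simp add: s_def)
        have "int d dvd int (fr 1 1) - (int r + int s)"
          unfolding E by (rule dvd_diff[OF dvd_add[OF A B] cross[OF t10 True]])
        then show ?thesis using 4 by simp
      next
        case False
        then have n10: "(1,0) \<notin> L" using c2 that 4 by auto
        then show ?thesis using 4 False that dmod[of d "fr 1 1"] by (simp add: r_def s_def)
      qed
    qed
  qed
  have HH: "H = HS n d (Lc c) r s"
  proof (rule Set.set_eqI)
    fix x :: "int \<times> (nat \<times> nat)"
    obtain e a b where x: "x = (e,(a,b))" by (cases x) auto
    have "x \<in> H \<longleftrightarrow> (e,b) \<in> L \<and> a < 2*n \<and> int d dvd (int a - int (fr e b))" using Hrep x by simp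
    also have "\<dots> \<longleftrightarrow> (e,b) \<in> L \<and> a < 2*n \<and> int d dvd (int a - (e * int r + int b * int s))"
    proof (cases "(e,b) \<in> L")
      case True
      have EQ: "int a - (e * int r + int b * int s) = (int a - int (fr e b)) + (int (fr e b) - (e * int r + int b * int s))" by simp
      have iff: "int d dvd (int a - (e * int r + int b * int s)) \<longleftrightarrow> int d dvd (int a - int (fr e b))"
        unfolding EQ by (rule dvd_add_left_iff[OF key[OF True]])
      show ?thesis using iff by blast
    qed simp
    also have "\<dots> \<longleftrightarrow> x \<in> HS n d (Lc c) r s" unfolding x HS_def LL by simp
    finally show "x \<in> H \<longleftrightarrow> x \<in> HS n d (Lc c) r s" .
  qed
  have rlt: "r < d" unfolding r_def using dpos by simp
  have slt: "s < d" unfolding s_def using dpos by simp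
  have c5: "c < 5" unfolding c_def by simp
  have cr: "c \<in> {0,2,3} \<longrightarrow> r = 0" unfolding c_def r_def by auto
  have cs: "c \<in> {0,1} \<longrightarrow> s = 0" unfolding c_def s_def using c2 by auto
  have dr: "d dvd 2*r"
  proof (cases "(1,0) \<in> L")
    case True
    have "(2 * fr 1 0) mod d = 0" using d2r[OF True] by (simp add: mod_eq_0_iff_dvd)
    moreover have "(2 * (fr 1 0 mod d)) mod d = (2 * fr 1 0) mod d" by (simp add: mod_mult_right_eq)
    ultimately have "(2 * (fr 1 0 mod d)) mod d = 0" by simp
    then show ?thesis using True unfolding r_def by (simp add: mod_eq_0_iff_dvd)
  qed (simp add: r_def)
  have cn: "c \<in> {2,3,4} \<longrightarrow> d dvd n" unfolding c_def using dnn by (auto split: if_splits)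
  show ?thesis using c5 rlt slt cr cs dr cn HH by blast
qed

end

end

definition V :: "nat \<Rightarrow> (nat \<times> nat \<times> nat \<times> nat) set" where
  "V m = {(k,c,r,s). k \<le> m \<and> c < 5 \<and> r < 2^k \<and> s < 2^k \<and> (c \<in> {0,2,3} \<longrightarrow> r = 0) \<and> (c \<in> {0,1} \<longrightarrow> s = 0)
      \<and> 2^k dvd 2*r \<and> (c \<in> {2,3,4} \<longrightarrow> k < m)}"

definition Psi :: "nat \<Rightarrow> nat \<times> nat \<times> nat \<times> nat \<Rightarrow> (int \<times> (nat \<times> nat)) set" where
  "Psi n p = (case p of (k,c,r,s) \<Rightarrow> HS n (2^k) (Lc c) r s)"

lemma Lc_sub: "Lc c \<subseteq> {0,1} \<times> {0,1}" by (auto simp: Lc_def)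
lemma Lc_00: "(0,0) \<in> Lc c" by (auto simp: Lc_def)

lemma Lc_closed:
  assumes "c < 5" "(e,b) \<in> Lc c" "(e',b') \<in> Lc c"
  shows "((e+e') mod 2, (b+b') mod 2) \<in> Lc c"
proof -
  have "e \<in> {0,1}" "b \<in> {0,1}" "e' \<in> {0,1}" "b' \<in> {0,1}" using assms(2,3) by (auto simp: Lc_def)
  then consider "e = 0" "b = 0" | "e = 1" "b = 0" | "e = 0" "b = 1" | "e = 1" "b = 1" by auto
  then show ?thesis
  proof cases
    case 1 then show ?thesis using assms(3) by (auto simp: Lc_def)
  next
    case 2 then show ?thesis using assms by (auto simp: Lc_def)
  next
    case 3 then show ?thesis using assms by (auto simp: Lc_def)
  next
    case 4 then show ?thesis using assms by (auto simp: Lc_def)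
  qed
qed

lemma Lc_b1: "(e,1) \<in> Lc c \<Longrightarrow> c \<in> {2,3,4} \<or> c \<ge> 5"
  by (auto simp: Lc_def)


lemma Psi_subgroup:
  assumes m: "m \<ge> 1" and nn: "n = 2^(m-1)" and p: "p \<in> V m"
  shows "subgroup (Psi n p) (Gq n)"
proof -
  obtain k c r s where pe: "p = (k,c,r,s)" by (cases p) auto
  have km: "k \<le> m" and c5: "c < 5" and dr: "2^k dvd 2*r" and ck: "c \<in> {2,3,4} \<longrightarrow> k < m"
    using p unfolding pe V_def by auto
  have n0: "n > 0" using nn by simp
  have N: "2*n = 2^m" using nn m by (cases m) auto
  have dN: "2^k dvd 2*n" unfolding N using km by (rule le_imp_power_dvd)
  have r2: "int (2^k) dvd 2 * int r"
  proof -
    have "int (2^k) dvd int (2*r)" by (subst int_dvd_int_iff) (rule dr)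
    then show ?thesis by simp
  qed
  have dn: "2^k dvd n" if "(e,1) \<in> Lc c" for e
  proof -
    have "k < m" using Lc_b1[OF that] c5 ck by auto
    then have "k \<le> m - 1" by simp
    then show ?thesis unfolding nn by (rule le_imp_power_dvd)
  qed
  show ?thesis unfolding pe Psi_def
    by (simp only: prod.case) (rule HS_subgroup[OF n0 dN Lc_sub Lc_00 Lc_closed[OF c5] r2 dn])
qed

lemma mod_dvd_eq:
  assumes "x < d" "y < d" "int d dvd (int x - int y)"
  shows "x = y"
proof -
  have "int x mod int d = int y mod int d" using assms(3) by (simp add: mod_eq_dvd_iff)
  then have "x mod d = y mod d" by (simp add: zmod_int[symmetric])
  then show ?thesis using assms(1,2) by simp
qed

lemma HS_mem: "(e,(a,b)) \<in> HS n d L r s \<longleftrightarrow> (e,b) \<in> L \<and> a < 2*n \<and> int d dvd (int a - (e * int r + int b * int s))"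
  by (simp add: HS_def)

lemma Lc_10: "c < 5 \<Longrightarrow> (1,0) \<in> Lc c \<longleftrightarrow> c = 1 \<or> c = 4" by (auto simp: Lc_def)
lemma Lc_01: "c < 5 \<Longrightarrow> (0,1) \<in> Lc c \<longleftrightarrow> c = 2 \<or> c = 4" by (auto simp: Lc_def)
lemma Lc_11: "c < 5 \<Longrightarrow> (1,1) \<in> Lc c \<longleftrightarrow> c = 3 \<or> c = 4" by (auto simp: Lc_def)

lemma Lc_inj: "c < 5 \<Longrightarrow> c' < 5 \<Longrightarrow> Lc c = Lc c' \<Longrightarrow> c = c'"
proof -
  assume a: "c < 5" "c' < 5" "Lc c = Lc c'"
  have "(c = 1 \<or> c = 4) = (c' = 1 \<or> c' = 4)" using Lc_10[OF a(1)] Lc_10[OF a(2)] a(3) by simp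
  moreover have "(c = 2 \<or> c = 4) = (c' = 2 \<or> c' = 4)" using Lc_01[OF a(1)] Lc_01[OF a(2)] a(3) by simp
  moreover have "(c = 3 \<or> c = 4) = (c' = 3 \<or> c' = 4)" using Lc_11[OF a(1)] Lc_11[OF a(2)] a(3) by simp
  ultimately show "c = c'" using a(1,2) by presburger
qed


lemma Psi_mem: "x \<in> Psi n (k,c,r,s) \<longleftrightarrow> x \<in> HS n (2^k) (Lc c) r s"
  by (simp add: Psi_def)

lemma Psi_inj:
  assumes m: "m \<ge> 1" and nn: "n = 2^(m-1)"
  shows "inj_on (Psi n) (V m)"
proof (rule inj_onI)
  fix p p' assume p: "p \<in> V m" and p': "p' \<in> V m" and eq: "Psi n p = Psi n p'"
  obtain k c r s where pe: "p = (k,c,r,s)" by (cases p) auto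
  obtain k' c' r' s' where pe': "p' = (k',c',r',s')" by (cases p') auto
  have N: "2*n = 2^m" using nn m by (cases m) auto
  have P: "k \<le> m" "c < 5" "r < 2^k" "s < 2^k" "c \<in> {0,2,3} \<longrightarrow> r = 0" "c \<in> {0,1} \<longrightarrow> s = 0"
    using p unfolding pe V_def by auto
  have P': "k' \<le> m" "c' < 5" "r' < 2^k'" "s' < 2^k'" "c' \<in> {0,2,3} \<longrightarrow> r' = 0" "c' \<in> {0,1} \<longrightarrow> s' = 0"
    using p' unfolding pe' V_def by auto
  have EQ: "x \<in> HS n (2^k) (Lc c) r s \<longleftrightarrow> x \<in> HS n (2^k') (Lc c') r' s'" for x
    using eq unfolding pe pe' Psi_def by simp
  have kk: "k = k'"
  proof (rule ccontr)
    assume "k \<noteq> k'"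
    then consider "k < k'" | "k' < k" by linarith
    then show False
    proof cases
      case 1
      have "(0,(2^k,0)) \<in> HS n (2^k) (Lc c) r s"
        using Lc_00 1 P'(1) N power_strict_increasing[of k m "2::nat"] by (simp add: HS_mem)
      then have "(0,(2^k,0)) \<in> HS n (2^k') (Lc c') r' s'" using EQ by blast
      then have "int (2^k') dvd int (2^k)" by (simp add: HS_mem)
      then have "(2::nat)^k' dvd 2^k" by (subst (asm) int_dvd_int_iff)
      then have "k' \<le> k" by (rule power_dvd_imp_le) simp
      then show False using 1 by simp
    next
      case 2
      have "(0,(2^k',0)) \<in> HS n (2^k') (Lc c') r' s'"
        using Lc_00 2 P(1) N power_strict_increasing[of k' m "2::nat"] by (simp add: HS_mem)
      then have "(0,(2^k',0)) \<in> HS n (2^k) (Lc c) r s" using EQ by blast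
      then have "int (2^k) dvd int (2^k')" by (simp add: HS_mem)
      then have "(2::nat)^k dvd 2^k'" by (subst (asm) int_dvd_int_iff)
      then have "k \<le> k'" by (rule power_dvd_imp_le) simp
      then show False using 2 by simp
    qed
  qed
  have dle: "(2::nat)^k \<le> 2*n" unfolding N using P(1) by (simp add: power_increasing)
  have layer: "(e,b) \<in> Lc c \<longleftrightarrow> (\<exists>a. (e,(a,b)) \<in> HS n (2^k) (Lc c) r s)" for e b c r s
  proof
    assume eb: "(e,b) \<in> Lc c"
    define a where "a = nat ((e * int r + int b * int s) mod int (2^k))"
    have aI: "int a = (e * int r + int b * int s) mod int (2^k)" unfolding a_def by simp
    have "a < 2^k" unfolding a_def by (simp add: nat_less_iff)
    then have "a < 2*n" using dle by linarith
    moreover have "int (2^k) dvd (int a - (e * int r + int b * int s))"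
      unfolding aI by (simp add: mod_eq_dvd_iff[symmetric])
    ultimately show "\<exists>a. (e,(a,b)) \<in> HS n (2^k) (Lc c) r s" using eb by (auto simp: HS_mem)
  qed (auto simp: HS_mem)
  have cc: "c = c'"
  proof -
    have "Lc c = Lc c'"
    proof (rule Set.set_eqI)
      fix x :: "int \<times> nat"
      obtain e b where x: "x = (e,b)" by (cases x)
      show "x \<in> Lc c \<longleftrightarrow> x \<in> Lc c'" unfolding x layer[of e b c r s] layer[of e b c' r' s'] using EQ kk by simp
    qed
    then show ?thesis using Lc_inj P(2) P'(2) by blast
  qed
  have rr: "r = r'"
  proof (cases "c = 1 \<or> c = 4")
    case True
    have "(1,(r,0)) \<in> HS n (2^k) (Lc c) r s"
      using Lc_10[OF P(2)] True P(3) dle by (simp add: HS_mem)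
    then have "(1,(r,0)) \<in> HS n (2^k') (Lc c') r' s'" using EQ by blast
    then have "int (2^k) dvd (int r - int r')" using kk cc by (simp add: HS_mem)
    then show ?thesis using mod_dvd_eq P(3) P'(3) kk by metis
  next
    case False
    then show ?thesis using P(2,5) P'(5) cc by auto
  qed
  have ss: "s = s'"
  proof -
    consider "c = 2 \<or> c = 4" | "c = 3" | "c = 0 \<or> c = 1" using P(2) by linarith
    then show ?thesis
    proof cases
      case 1
      have "(0,(s,1)) \<in> HS n (2^k) (Lc c) r s"
        using Lc_01[OF P(2)] 1 P(4) dle by (simp add: HS_mem)
      then have "(0,(s,1)) \<in> HS n (2^k') (Lc c') r' s'" using EQ by blast
      then have "int (2^k) dvd (int s - int s')" using kk cc by (simp add: HS_mem)
      then show ?thesis using mod_dvd_eq P(4) P'(4) kk by metis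
    next
      case 2
      have r0: "r = 0" using P(5) 2 by simp
      have "(1,(s,1)) \<in> HS n (2^k) (Lc c) r s"
        using Lc_11[OF P(2)] 2 P(4) dle r0 by (simp add: HS_mem)
      then have "(1,(s,1)) \<in> HS n (2^k') (Lc c') r' s'" using EQ by blast
      then have "int (2^k) dvd (int s - int s')" using kk cc rr r0 by (simp add: HS_mem)
      then show ?thesis using mod_dvd_eq P(4) P'(4) kk by metis
    next
      case 3
      then show ?thesis using P(6) P'(6) cc by auto
    qed
  qed
  show "p = p'" unfolding pe pe' using kk cc rr ss by simp
qed


lemma subgroups_eq:
  assumes m: "m \<ge> 1" and nn: "n = 2^(m-1)"
  shows "{H. subgroup H (Gq n)} = Psi n ` V m"
proof
  show "Psi n ` V m \<subseteq> {H. subgroup H (Gq n)}" using Psi_subgroup[OF m nn] by auto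
  show "{H. subgroup H (Gq n)} \<subseteq> Psi n ` V m"
  proof
    fix H assume "H \<in> {H. subgroup H (Gq n)}"
    then have sg: "subgroup H (Gq n)" by simp
    have n0: "n > 0" using nn by simp
    have N: "2*n = 2^m" using nn m by (cases m) auto
    obtain d where dN: "d dvd 2*n" and dS: "\<And>a. (0,(a,0)) \<in> H \<longleftrightarrow> a < 2*n \<and> d dvd a"
      using Sdesc[OF n0 sg] by blast
    obtain c r s where R: "c < 5" "r < d" "s < d" "c \<in> {0,2,3} \<longrightarrow> r = 0" "c \<in> {0,1} \<longrightarrow> s = 0"
      "d dvd 2*r" "c \<in> {2,3,4} \<longrightarrow> d dvd n" "H = HS n d (Lc c) r s"
      using main_rep[OF n0 sg dN dS] by blast
    obtain k where k: "k \<le> m" "d = 2^k" using dN unfolding N divides_primepow_nat[OF two_is_prime_nat] by blast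
    have "c \<in> {2,3,4} \<longrightarrow> k < m"
    proof
      assume "c \<in> {2,3,4}"
      then have "(2::nat)^k dvd 2^(m-1)" using R(7) k(2) nn by simp
      then have "k \<le> m - 1" by (rule power_dvd_imp_le) simp
      then show "k < m" using m by simp
    qed
    then have "(k,c,r,s) \<in> V m" using R k unfolding V_def by auto
    moreover have "H = Psi n (k,c,r,s)" using R(8) k(2) by (simp add: Psi_def)
    ultimately show "H \<in> Psi n ` V m" by blast
  qed
qed

definition Tset :: "nat \<Rightarrow> nat set" where "Tset k = {r. r < 2^k \<and> 2^k dvd 2*r}"

lemma Tset_card: "card (Tset k) = (if k = 0 then 1 else 2)"
proof (cases k)
  case 0
  then have "Tset k = {0}" by (auto simp: Tset_def)
  then show ?thesis using 0 by simp
next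
  case (Suc j)
  have "Tset k = {0, 2^j}"
  proof (rule Set.set_eqI)
    fix r
    show "r \<in> Tset k \<longleftrightarrow> r \<in> {0, 2^j}"
    proof
      assume "r \<in> Tset k"
      then have r: "r < 2 * 2^j" "2 * 2^j dvd 2 * r" using Suc by (auto simp: Tset_def)
      then have "2^j dvd r" by simp
      then obtain q where q: "r = 2^j * q" by (elim dvdE)
      then have "q < 2" using r(1) by simp
      then have "q = 0 \<or> q = 1" by auto
      then show "r \<in> {0, 2^j}" using q by auto
    next
      assume "r \<in> {0, 2^j}"
      then show "r \<in> Tset k" using Suc by (auto simp: Tset_def)
    qed
  qed
  then show ?thesis using Suc by simp
qed

definition Rset :: "nat \<Rightarrow> nat \<Rightarrow> nat \<Rightarrow> nat set" where
  "Rset m k c = {r. r < 2^k \<and> (c \<in> {0,2,3} \<longrightarrow> r = 0) \<and> 2^k dvd 2*r \<and> (c \<in> {2,3,4} \<longrightarrow> k < m)}"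

definition Sset :: "nat \<Rightarrow> nat \<Rightarrow> nat set" where
  "Sset k c = {s. s < 2^k \<and> (c \<in> {0,1} \<longrightarrow> s = 0)}"

lemma V_Sigma: "V m = (SIGMA k:{..m}. SIGMA c:{..<5}. SIGMA r:Rset m k c. Sset k c)"
  by (auto simp: V_def Rset_def Sset_def)

lemma Rset_fin: "finite (Rset m k c)" by (rule finite_subset[of _ "{..<2^k}"]) (auto simp: Rset_def)
lemma Sset_fin: "finite (Sset k c)" by (rule finite_subset[of _ "{..<2^k}"]) (auto simp: Sset_def)

lemma card_V_sum: "card (V m) = (\<Sum>k\<le>m. \<Sum>c<5. card (Rset m k c) * card (Sset k c))"
  unfolding V_Sigma using Rset_fin Sset_fin by (simp add: card_SigmaI)

lemma Rc0: "card (Rset m k 0) = 1"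
proof - have "Rset m k 0 = {0}" by (auto simp: Rset_def) then show ?thesis by simp qed
lemma Rc1: "card (Rset m k 1) = card (Tset k)"
proof - have "Rset m k 1 = Tset k" by (auto simp: Rset_def Tset_def) then show ?thesis by simp qed
lemma Rc1': "card (Rset m k (Suc 0)) = card (Tset k)" using Rc1 by simp
lemma Rc2: "card (Rset m k 2) = (if k < m then 1 else 0)"
proof - have "Rset m k 2 = (if k < m then {0} else {})" by (auto simp: Rset_def) then show ?thesis by simp qed
lemma Rc3: "card (Rset m k 3) = (if k < m then 1 else 0)"
proof - have "Rset m k 3 = (if k < m then {0} else {})" by (auto simp: Rset_def) then show ?thesis by simp qed
lemma Rc4: "card (Rset m k 4) = (if k < m then card (Tset k) else 0)"
proof - have "Rset m k 4 = (if k < m then Tset k else {})" by (auto simp: Rset_def Tset_def) then show ?thesis by simp qed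
lemma Sc01: "c \<in> {0,1} \<Longrightarrow> card (Sset k c) = 1"
proof - assume "c \<in> {0,1}" then have "Sset k c = {0}" by (auto simp: Sset_def) then show ?thesis by simp qed
lemma Sc2: "c \<notin> {0,1} \<Longrightarrow> card (Sset k c) = 2^k"
proof - assume "c \<notin> {0,1}" then have "Sset k c = {..<2^k}" by (auto simp: Sset_def) then show ?thesis by simp qed

lemma inner_sum: "(\<Sum>c<5. card (Rset m k c) * card (Sset k c)) =
   1 + card (Tset k) + (if k < m then 2 * 2^k + card (Tset k) * 2^k else 0)"
proof -
  have "{..<5::nat} = {0,1,2,3,4}" by auto
  then have "(\<Sum>c<5. card (Rset m k c) * card (Sset k c)) =
      card (Rset m k 0) * card (Sset k 0) + card (Rset m k 1) * card (Sset k 1) + card (Rset m k 2) * card (Sset k 2)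
      + card (Rset m k 3) * card (Sset k 3) + card (Rset m k 4) * card (Sset k 4)" by simp
  also have "\<dots> = 1 + card (Tset k) + (if k < m then 2 * 2^k + card (Tset k) * 2^k else 0)"
    by (simp add: Rc0 Rc1 Rc1' Rc2 Rc3 Rc4 Sc01 Sc2)
  finally show ?thesis .
qed


lemma sumA: "(\<Sum>k\<le>m. 1 + card (Tset k)) = 3*m + 2"
  by (induction m) (simp_all add: Tset_card)

lemma sumB: "m \<ge> 1 \<Longrightarrow> (\<Sum>k<m. 2 * 2^k + card (Tset k) * 2^k) + 5 = (2::nat)^(m+2)"
proof (induction m rule: dec_induct)
  case base
  then show ?case by (simp add: Tset_card)
next
  case (step m)
  then show ?case by (simp add: Tset_card)
qed

lemma card_V: assumes "m \<ge> 1" shows "card (V m) + 3 = 2^(m+2) + 3*m"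
proof -
  have "card (V m) = (\<Sum>k\<le>m. 1 + card (Tset k) + (if k < m then 2 * 2^k + card (Tset k) * 2^k else 0))"
    unfolding card_V_sum inner_sum ..
  also have "\<dots> = (\<Sum>k\<le>m. 1 + card (Tset k)) + (\<Sum>k\<le>m. (if k < m then 2 * 2^k + card (Tset k) * 2^k else 0))"
    by (rule sum.distrib)
  also have "(\<Sum>k\<le>m. (if k < m then 2 * 2^k + card (Tset k) * 2^k else 0)) = (\<Sum>k<m. 2 * 2^k + card (Tset k) * 2^k)"
  proof -
    have "(\<Sum>k\<le>m. (if k < m then 2 * 2^k + card (Tset k) * 2^k else 0)) = (\<Sum>k<Suc m. (if k < m then 2 * 2^k + card (Tset k) * 2^k else 0))"
      by (simp only: lessThan_Suc_atMost)
    also have "\<dots> = (\<Sum>k<m. (if k < m then 2 * 2^k + card (Tset k) * 2^k else 0))" by simp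
    also have "\<dots> = (\<Sum>k<m. 2 * 2^k + card (Tset k) * 2^k)" by (rule sum.cong) auto
    finally show ?thesis .
  qed
  finally have "card (V m) = 3*m + 2 + (\<Sum>k<m. 2 * 2^k + card (Tset k) * 2^k)" using sumA by simp
  then show ?thesis using sumB[OF assms] by simp
qed

lemma divs_pow2: "{d. d dvd (2::nat)^j} = (\<lambda>i. 2^i) ` {..j}"
  using divides_primepow_nat[OF two_is_prime_nat] by auto

lemma num_div_pow2: "num_divisors (2^j) = j + 1"
proof -
  have "inj_on (\<lambda>i. (2::nat)^i) {..j}" by (rule inj_onI) simp
  then show ?thesis unfolding num_divisors_def divs_pow2 by (simp add: card_image)
qed

lemma geo2: "(\<Sum>i\<le>j. (2::nat)^i) + 1 = 2^(j+1)"
  by (induction j) simp_all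

lemma sum_div_pow2: "sum_divisors (2^j) + 1 = 2^(j+1)"
proof -
  have "inj_on (\<lambda>i. (2::nat)^i) {..j}" by (rule inj_onI) simp
  then have "sum_divisors (2^j) = (\<Sum>i\<le>j. (2::nat)^i)" unfolding sum_divisors_def divs_pow2 by (simp add: sum.reindex)
  then show ?thesis using geo2 by simp
qed


theorem corollary2p4:
  fixes m n' :: nat
  assumes "m \<ge> 2" and "n' = 2 ^ (m - 1)"
  shows "int (card {H. subgroup H (integer_mod_group 2 \<times>\<times> quaternion_group n')})
           = 5 * int (sum_divisors n') + 3 * int (num_divisors n') - 2 * int n' + 2"
proof -
  have m1: "m \<ge> 1" using assms(1) by simp
  have "{H. subgroup H (integer_mod_group 2 \<times>\<times> quaternion_group n')} = Psi n' ` V m"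
    using subgroups_eq[OF m1 assms(2)] unfolding Gq_def .
  then have c: "card {H. subgroup H (integer_mod_group 2 \<times>\<times> quaternion_group n')} = card (V m)"
    using card_image[OF Psi_inj[OF m1 assms(2)]] by simp
  define P where "P = (2::nat)^(m-1)"
  have P2: "(2::nat)^m = 2*P" unfolding P_def using m1 by (cases m) auto
  have P8: "(2::nat)^(m+2) = 8*P" using P2 by simp
  have cv: "card (V m) + 3 = 8*P + 3*m" using card_V[OF m1] P8 by simp
  have nd: "num_divisors n' = m" using num_div_pow2[of "m-1"] assms(2) m1 by simp
  have sd: "sum_divisors n' + 1 = 2*P" using sum_div_pow2[of "m-1"] assms(2) m1 P2 by simp
  have nP: "n' = P" using assms(2) P_def by simp
  have "int (card (V m)) = 8 * int P + 3 * int m - 3" using cv by linarith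
  moreover have "int (sum_divisors n') = 2 * int P - 1" using sd by linarith
  moreover have "int (num_divisors n') = int m" using nd by simp
  moreover have "int n' = int P" using nP by simp
  moreover have "int (card {H. subgroup H (integer_mod_group 2 \<times>\<times> quaternion_group n')}) = int (card (V m))"
    using c by simp
  ultimately show ?thesis by linarith
qed

end
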